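(* Let $f:\mathbb{R}^d\to\mathbb{R}$ be Lipschitz continuous and SISTr, and let $\ell\in\mathbb{R}$. Then for each $x\in\mathbb{R}^d$ there is a unique $c_x\in\mathbb{R}$ with $f(x+c_x\mathbf{1})=\ell$, and the map $x\mapsto c_x$ is continuous.
   Context: $\mathbf{1}$ is the all-ones vector in $\mathbb{R}^d$. A function $g:\mathbb{R}^d\to\mathbb{R}$ is SISTr (strictly increasing under scalar translation) if, for every $x\in\mathbb{R}^d$, the map $c\in\mathbb{R}\mapsto g(x+c\mathbf{1})$ is strictly increasing and maps $\mathbb{R}$ onto $\mathbb{R}$. *)

theory Defs
  imports "HOL-Analysis.Analysis"
begin

definition ones :: "real ^ 'n" where
  "ones = (\<chi> i. 1)"

definition SISTr :: "(real ^ 'n \<Rightarrow> real) \<Rightarrow> bool" where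
  "SISTr g \<longleftrightarrow> (\<forall>x. strict_mono (\<lambda>c::real. g (x + c *\<^sub>R ones))
                      \<and> surj (\<lambda>c::real. g (x + c *\<^sub>R ones)))"

end

theory Submission
  imports Defs
begin

theorem lemma3p2:
  fixes f :: "real ^ 'n \<Rightarrow> real" and l :: real
  assumes "\<exists>L. L-lipschitz_on UNIV f"
    and "SISTr f"
  shows "(\<forall>x. \<exists>!c. f (x + c *\<^sub>R ones) = l)
         \<and> continuous_on UNIV (\<lambda>x. THE c. f (x + c *\<^sub>R ones) = l)"
proof -
  obtain L where L: "L-lipschitz_on UNIV f" using assms(1) by blast
  have L0: "0 \<le> L" using L by (simp add: lipschitz_on_def)
  have Lf: "\<bar>f y - f z\<bar> \<le> L * dist y z" for y z
    using L unfolding lipschitz_on_def dist_real_def by blast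
  have sm: "strict_mono (\<lambda>c::real. f (x + c *\<^sub>R ones))" for x
    using assms(2) unfolding SISTr_def by blast
  have sj: "surj (\<lambda>c::real. f (x + c *\<^sub>R ones))" for x
    using assms(2) unfolding SISTr_def by blast
  have ex: "\<exists>!c. f (x + c *\<^sub>R ones) = l" for x
  proof -
    obtain c where c: "f (x + c *\<^sub>R ones) = l" using surjD[OF sj[of x], of l] by metis
    show ?thesis
    proof (rule ex1I[of _ c])
      show "f (x + c *\<^sub>R ones) = l" by fact
      fix c' assume "f (x + c' *\<^sub>R ones) = l"
      then show "c' = c" using c strict_mono_eq[OF sm[of x], of c' c] by simp
    qed
  qed
  define C where "C x = (THE c. f (x + c *\<^sub>R ones) = l)" for x
  have C: "f (x + C x *\<^sub>R ones) = l" for x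
    unfolding C_def by (rule theI'[OF ex])
  have lt: "c < C x" if "f (x + c *\<^sub>R ones) < l" for x c
    using that C strict_mono_less[OF sm[of x], of c "C x"] by simp
  have gt: "C x < c" if "f (x + c *\<^sub>R ones) > l" for x c
    using that C strict_mono_less[OF sm[of x], of "C x" c] by simp
  have cont: "continuous_on UNIV C"
    unfolding continuous_on_iff
  proof (intro ballI allI impI)
    fix x0 :: "real ^ 'n" and e :: real
    assume e: "0 < e"
    define a where "a = f (x0 + (C x0 + e/2) *\<^sub>R ones) - l"
    define b where "b = l - f (x0 + (C x0 - e/2) *\<^sub>R ones)"
    have a: "a > 0" unfolding a_def using C[of x0] strict_mono_less[OF sm[of x0], of "C x0" "C x0 + e/2"] e by simp
    have b: "b > 0" unfolding b_def using C[of x0] strict_mono_less[OF sm[of x0], of "C x0 - e/2" "C x0"] e by simp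
    define d where "d = min a b / (L + 1)"
    have d: "d > 0" unfolding d_def using a b L0 by simp
    show "\<exists>d>0. \<forall>x'\<in>UNIV. dist x' x0 < d \<longrightarrow> dist (C x') (C x0) < e"
    proof (intro exI[of _ d] conjI ballI impI d)
      fix x' :: "real ^ 'n" assume dx: "dist x' x0 < d"
      have Ld: "L * dist x' x0 < min a b"
      proof -
        have "L * dist x' x0 \<le> (L+1) * dist x' x0" by (simp add: distrib_right)
        also have "\<dots> < (L+1) * d" using dx L0 by simp
        also have "\<dots> = min a b" unfolding d_def using L0 by simp
        finally show ?thesis .
      qed
      have dd: "dist (x' + c *\<^sub>R ones) (x0 + c *\<^sub>R ones) = dist x' x0" for c
        by (simp add: dist_norm)
      have "\<bar>f (x' + (C x0 + e/2) *\<^sub>R ones) - f (x0 + (C x0 + e/2) *\<^sub>R ones)\<bar> < a"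
        using Lf[of "x' + (C x0 + e/2) *\<^sub>R ones" "x0 + (C x0 + e/2) *\<^sub>R ones"] dd Ld by simp
      hence "f (x' + (C x0 + e/2) *\<^sub>R ones) > l" unfolding a_def by linarith
      hence u: "C x' < C x0 + e/2" by (rule gt)
      have "\<bar>f (x' + (C x0 - e/2) *\<^sub>R ones) - f (x0 + (C x0 - e/2) *\<^sub>R ones)\<bar> < b"
        using Lf[of "x' + (C x0 - e/2) *\<^sub>R ones" "x0 + (C x0 - e/2) *\<^sub>R ones"] dd Ld by simp
      hence "f (x' + (C x0 - e/2) *\<^sub>R ones) < l" unfolding b_def by linarith
      hence v: "C x0 - e/2 < C x'" by (rule lt)
      show "dist (C x') (C x0) < e" using u v e by (simp add: dist_real_def abs_less_iff)
    qed
  qed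
  have CC: "C = (\<lambda>x. THE c. f (x + c *\<^sub>R ones) = l)"
    by (rule ext) (simp add: C_def)
  show ?thesis using ex cont unfolding CC by blast
qed

end
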